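(* Let $d\in\{1,2,3\}$ and let $K\subset M^{m\times n}$ be a $d$-dimensional linear subspace without Rank-$1$ connections. Let $M_1,\dots,M_{q_0}$ be all the $2\times2$ minors of $m\times n$ matrices. Then there exists $\beta\in\mathbb{R}^{q_0}\setminus\{0\}$ such that $\sum_{k=1}^{q_0}\beta_kM_k(X)\ge0$ for all $X\in K$ and $\sum_{k=1}^{q_0}\beta_kM_k\not\equiv0$ on $K$.
   Context: A set has Rank-$1$ connections if it contains $A\ne B$ with $\mathrm{Rank}(A-B)=1$. *)

theory Defs
  imports "HOL-Analysis.Analysis"
begin

definition has_rank1_connections :: "(real^'n^'m) set \<Rightarrow> bool" where
  "has_rank1_connections S \<longleftrightarrow> (\<exists>A\<in>S. \<exists>B\<in>S. A \<noteq> B \<and> rank (A - B) = 1)"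

definition minor_indices :: "(('m::{finite,linorder}) \<times> 'm \<times> ('n::{finite,linorder}) \<times> 'n) set" where
  "minor_indices = {(i, j, k, l). i < j \<and> k < l}"

definition minor2 :: "'m \<times> 'm \<times> 'n \<times> 'n \<Rightarrow> real^'n^'m \<Rightarrow> real" where
  "minor2 idx X = (case idx of (i, j, k, l) \<Rightarrow> X$i$k * X$j$l - X$i$l * X$j$k)"

end

theory Submission
  imports Defs
begin

lemma eigen1:
  fixes T :: "'a::euclidean_space \<Rightarrow> 'a" and U :: "'a set"
  assumes U: "subspace U" "U \<noteq> {0}" and T: "linear T" "\<And>u. u \<in> U \<Longrightarrow> T u \<in> U"
    and sa: "\<And>u w. u \<in> U \<Longrightarrow> w \<in> U \<Longrightarrow> inner (T u) w = inner u (T w)"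
  shows "\<exists>\<mu> u. u \<in> U \<and> u \<noteq> 0 \<and> T u = \<mu> *\<^sub>R u"
proof -
  let ?S = "U \<inter> sphere 0 1"
  have cS: "compact ?S"
    using U(1) by (simp add: closed_subspace compact_Int_closed compact_sphere Int_commute closed_Int_compact)
  obtain u0 where u0: "u0 \<in> U" "u0 \<noteq> 0" using U subspace_0 by blast
  have "u0 /\<^sub>R norm u0 \<in> ?S" using u0 U(1) by (simp add: subspace_scale)
  hence ne: "?S \<noteq> {}" by blast
  have bl: "bounded_linear T" using T(1) by (simp add: linear_conv_bounded_linear)
  have ct: "continuous_on ?S (\<lambda>u. inner (T u) u)"
    by (intro continuous_intros linear_continuous_on bl)
  obtain v where v: "v \<in> ?S" and vmax: "\<And>y. y \<in> ?S \<Longrightarrow> inner (T y) y \<le> inner (T v) v"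
    using continuous_attains_sup[OF cS ne ct] by blast
  define lam where "lam = inner (T v) v"
  have vU: "v \<in> U" and nv: "norm v = 1" using v by auto
  have vv: "inner v v = 1" using nv by (simp add: dot_square_norm)
  define w where "w = T v - lam *\<^sub>R v"
  have wU: "w \<in> U" unfolding w_def using vU T(2) U(1) by (simp add: subspace_diff subspace_scale)
  have wv: "inner w v = 0" unfolding w_def lam_def using vv by (simp add: inner_diff_left)
  have Tvw: "inner (T v) w = inner w w"
    unfolding w_def by (simp add: inner_diff_right inner_diff_left inner_commute lam_def vv)
  have key: "2 * t * inner w w + t^2 * inner (T w) w \<le> lam * t^2 * inner w w" for t :: real
  proof -
    let ?y = "v + t *\<^sub>R w"
    have yU: "?y \<in> U" using vU wU U(1) by (simp add: subspace_add subspace_scale)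
    have ny: "inner ?y ?y = 1 + t^2 * inner w w"
      using vv wv by (simp add: inner_add_left inner_add_right inner_commute power2_eq_square)
    have ny0: "norm ?y > 0"
    proof -
      have "inner ?y ?y > 0" using ny by (simp add: add_pos_nonneg)
      thus ?thesis by (metis inner_zero_left less_irrefl zero_less_norm_iff)
    qed
    have "?y /\<^sub>R norm ?y \<in> ?S" using yU ny0 U(1) by (simp add: subspace_scale)
    hence "inner (T (?y /\<^sub>R norm ?y)) (?y /\<^sub>R norm ?y) \<le> lam" using vmax lam_def by blast
    moreover have "inner (T (?y /\<^sub>R norm ?y)) (?y /\<^sub>R norm ?y) = inner (T ?y) ?y / (norm ?y)^2"
      using linear_cmul[OF T(1), of "inverse (norm ?y)" ?y]
      by (simp add: inner_scaleR_left inner_scaleR_right power2_eq_square divide_inverse)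
    ultimately have "inner (T ?y) ?y / (norm ?y)^2 \<le> lam" by simp
    hence "inner (T ?y) ?y \<le> lam * (norm ?y)^2" using ny0 by (simp add: field_simps)
    also have "(norm ?y)^2 = 1 + t^2 * inner w w" using ny by (simp add: power2_norm_eq_inner)
    finally have A: "inner (T ?y) ?y \<le> lam * (1 + t^2 * inner w w)" .
    have "inner (T ?y) ?y = inner (T v) v + 2 * t * inner (T v) w + t^2 * inner (T w) w"
      using sa[OF wU vU] linear_add[OF T(1)] linear_cmul[OF T(1)] inner_commute[of w "T v"]
      by (simp add: inner_add_left inner_add_right power2_eq_square algebra_simps)
    thus ?thesis using A Tvw lam_def by (simp add: algebra_simps)
  qed
  have "inner w w = 0"
  proof (rule ccontr)
    assume ne0: "inner w w \<noteq> 0"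
    hence pos: "inner w w > 0" by (simp add: order_le_neq_trans)
    define C where "C = lam * inner w w - inner (T w) w"
    have k1: "2 * t * inner w w \<le> t^2 * C" for t using key[of t] by (simp add: C_def algebra_simps)
    show False
    proof (cases "C \<le> 0")
      case True then show False using k1[of 1] pos by simp
    next
      case False
      have "2 * (inner w w / C) * inner w w \<le> (inner w w / C)^2 * C" using k1 by blast
      hence "2 * (inner w w)^2 / C \<le> (inner w w)^2 / C" using False by (simp add: power2_eq_square field_simps)
      thus False using False pos by (simp add: divide_le_cancel)
    qed
  qed
  hence "w = 0" by simp
  thus ?thesis using vU nv unfolding w_def by (intro exI[of _ lam] exI[of _ v]) auto
qed


lemma common_eigen:
  fixes Ts :: "('a::euclidean_space \<Rightarrow> 'a) list" and U :: "'a set"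
  assumes "subspace U" "U \<noteq> {0}"
    and "\<forall>T\<in>set Ts. linear T \<and> (\<forall>u\<in>U. T u \<in> U) \<and> (\<forall>u\<in>U. \<forall>w\<in>U. inner (T u) w = inner u (T w))"
    and "\<forall>T\<in>set Ts. \<forall>T'\<in>set Ts. \<forall>u\<in>U. T (T' u) = T' (T u)"
  shows "\<exists>u\<in>U. u \<noteq> 0 \<and> (\<forall>T\<in>set Ts. \<exists>\<mu>. T u = \<mu> *\<^sub>R u)"
  using assms
proof (induction Ts arbitrary: U)
  case Nil
  then show ?case using subspace_0[of U] by auto
next
  case (Cons T Ts)
  have T: "linear T" "\<And>u. u \<in> U \<Longrightarrow> T u \<in> U" "\<And>u w. u \<in> U \<Longrightarrow> w \<in> U \<Longrightarrow> inner (T u) w = inner u (T w)"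
    using Cons.prems(3) by auto
  obtain mu u0 where u0: "u0 \<in> U" "u0 \<noteq> 0" "T u0 = mu *\<^sub>R u0"
    using eigen1[OF Cons.prems(1,2) T] by blast
  define E where "E = {u\<in>U. T u = mu *\<^sub>R u}"
  have sE: "subspace E"
    unfolding E_def subspace_def using Cons.prems(1) linear_add[OF T(1)] linear_cmul[OF T(1)]
    by (auto simp: subspace_def linear_0[OF T(1)] scaleR_add_right)
  have nE: "E \<noteq> {0}" using u0 unfolding E_def by auto
  have EU: "E \<subseteq> U" unfolding E_def by auto
  have inv: "T' u \<in> E" if "T' \<in> set Ts" "u \<in> E" for T' u
  proof -
    have "u \<in> U" "T u = mu *\<^sub>R u" using that(2) unfolding E_def by auto
    moreover have "linear T'" "T' u \<in> U" using Cons.prems(3) that(1) \<open>u \<in> U\<close> by auto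
    moreover have "T (T' u) = T' (T u)" using Cons.prems(4) that(1) \<open>u \<in> U\<close> by auto
    ultimately show ?thesis unfolding E_def using linear_cmul by fastforce
  qed
  have "\<exists>u\<in>E. u \<noteq> 0 \<and> (\<forall>T\<in>set Ts. \<exists>\<mu>. T u = \<mu> *\<^sub>R u)"
  proof (rule Cons.IH[OF sE nE])
    show "\<forall>T\<in>set Ts. linear T \<and> (\<forall>u\<in>E. T u \<in> E) \<and> (\<forall>u\<in>E. \<forall>w\<in>E. inner (T u) w = inner u (T w))"
      using Cons.prems(3) inv EU by (meson list.set_intros(2) subsetD)
    show "\<forall>T\<in>set Ts. \<forall>T'\<in>set Ts. \<forall>u\<in>E. T (T' u) = T' (T u)"
      using Cons.prems(4) EU by (meson list.set_intros(2) subsetD)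
  qed
  then obtain u where "u \<in> E" "u \<noteq> 0" "\<forall>T\<in>set Ts. \<exists>\<mu>. T u = \<mu> *\<^sub>R u" by blast
  then show ?case using EU unfolding E_def by auto
qed

lemma inner_mv: "inner x (A *v a) = (\<Sum>i\<in>UNIV. \<Sum>k\<in>UNIV. x$i * A$i$k * a$k)"
  for x :: "real^'m" and A :: "real^'n^'m"
  by (simp add: inner_vec_def matrix_vector_mult_def sum_distrib_left mult.assoc)

lemma quad_expand:
  fixes A :: "real^('n::{finite,linorder})^('m::{finite,linorder})" and x y :: "real^('m::{finite,linorder})" and a b :: "real^('n::{finite,linorder})"
  shows "inner x (A *v a) * inner y (A *v b) - inner x (A *v b) * inner y (A *v a) =
    (\<Sum>i\<in>UNIV. \<Sum>j\<in>UNIV. \<Sum>k\<in>UNIV. \<Sum>l\<in>UNIV. x$i*y$j*a$k*b$l * minor2 (i,j,k,l) A)"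
proof -
  have t1: "inner x (A *v a) * inner y (A *v b) = (\<Sum>i\<in>UNIV. \<Sum>j\<in>UNIV. \<Sum>k\<in>UNIV. \<Sum>l\<in>UNIV. x$i*y$j*a$k*b$l * (A$i$k * A$j$l))"
  proof -
    have "inner x (A *v a) * inner y (A *v b) = (\<Sum>i\<in>UNIV. \<Sum>j\<in>UNIV. \<Sum>k\<in>UNIV. \<Sum>l\<in>UNIV. (x$i * A$i$k * a$k) * (y$j * A$j$l * b$l))"
      unfolding inner_mv by (simp add: sum_product)
    then show ?thesis by (simp add: mult.commute mult.left_commute mult.assoc)
  qed
  have t2: "inner x (A *v b) * inner y (A *v a) = (\<Sum>i\<in>UNIV. \<Sum>j\<in>UNIV. \<Sum>k\<in>UNIV. \<Sum>l\<in>UNIV. x$i*y$j*a$k*b$l * (A$i$l * A$j$k))"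
  proof -
    have "inner x (A *v b) * inner y (A *v a) = (\<Sum>i\<in>UNIV. \<Sum>j\<in>UNIV. \<Sum>l\<in>UNIV. \<Sum>k\<in>UNIV. (x$i * A$i$l * b$l) * (y$j * A$j$k * a$k))"
      unfolding inner_mv by (simp add: sum_product)
    also have "\<dots> = (\<Sum>i\<in>UNIV. \<Sum>j\<in>UNIV. \<Sum>k\<in>UNIV. \<Sum>l\<in>UNIV. (x$i * A$i$l * b$l) * (y$j * A$j$k * a$k))"
      by (rule sum.cong[OF refl], rule sum.cong[OF refl], rule sum.swap)
    finally show ?thesis by (simp add: mult.commute mult.left_commute mult.assoc)
  qed
  show ?thesis unfolding t1 t2 minor2_def
    by (simp add: right_diff_distrib sum_subtractf)
qed

definition phi :: "('k::finite \<Rightarrow> real^'n^'m) \<Rightarrow> real^'m \<Rightarrow> real^'n \<Rightarrow> real^'k" where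
  "phi Y x b = (\<chi> t. inner x (Y t *v b))"

lemma minor2_all_zero:
  fixes Y :: "'k::finite \<Rightarrow> real^('n::{finite,linorder})^('m::{finite,linorder})"
  assumes "\<forall>idx\<in>minor_indices. (\<Sum>t\<in>UNIV. minor2 idx (Y t)) = 0"
  shows "(\<Sum>t\<in>UNIV. minor2 (i,j,k,l) (Y t)) = 0"
proof -
  have n1: "(\<Sum>t\<in>UNIV. minor2 (i,j,k,l) (Y t)) = - (\<Sum>t\<in>UNIV. minor2 (j,i,k,l) (Y t))" for i j k l
    by (simp add: minor2_def sum_negf[symmetric] algebra_simps)
  have n2: "(\<Sum>t\<in>UNIV. minor2 (i,j,k,l) (Y t)) = - (\<Sum>t\<in>UNIV. minor2 (i,j,l,k) (Y t))" for i j k l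
    by (simp add: minor2_def sum_negf[symmetric] algebra_simps)
  have z1: "(\<Sum>t\<in>UNIV. minor2 (i,i,k,l) (Y t)) = 0" for i k l
    by (simp add: minor2_def)
  have z2: "(\<Sum>t\<in>UNIV. minor2 (i,j,k,k) (Y t)) = 0" for i j k
    by (simp add: minor2_def)
  have base: "(\<Sum>t\<in>UNIV. minor2 (i,j,k,l) (Y t)) = 0" if "i < j" "k < l" for i j k l
  proof -
    have "(i,j,k,l) \<in> minor_indices" using that by (simp add: minor_indices_def)
    then show ?thesis using assms by blast
  qed
  show ?thesis
  proof (cases i j rule: linorder_cases)
    case less
    then show ?thesis
    proof (cases k l rule: linorder_cases)
      case less with \<open>i<j\<close> show ?thesis using base by blast
    next
      case equal then show ?thesis using z2 by blast
    next
      case greater with \<open>i<j\<close> show ?thesis using base[of i j l k] n2[of i j k l] by linarith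
    qed
  next
    case equal then show ?thesis using z1 by blast
  next
    case greater
    then show ?thesis
    proof (cases k l rule: linorder_cases)
      case less with \<open>i>j\<close> show ?thesis using base[of j i k l] n1[of i j k l] by linarith
    next
      case equal then show ?thesis using z2 by blast
    next
      case greater with \<open>i>j\<close> show ?thesis using base[of j i l k] n1[of i j k l] n2[of j i k l] by linarith
    qed
  qed
qed

lemma swap5: "(\<Sum>t\<in>A. \<Sum>i\<in>B. \<Sum>j\<in>C. \<Sum>k\<in>D. \<Sum>l\<in>E. f t i j k l) = (\<Sum>i\<in>B. \<Sum>j\<in>C. \<Sum>k\<in>D. \<Sum>l\<in>E. \<Sum>t\<in>A. f t i j k l)"
proof -
  have "(\<Sum>t\<in>A. \<Sum>i\<in>B. \<Sum>j\<in>C. \<Sum>k\<in>D. \<Sum>l\<in>E. f t i j k l) = (\<Sum>i\<in>B. \<Sum>t\<in>A. \<Sum>j\<in>C. \<Sum>k\<in>D. \<Sum>l\<in>E. f t i j k l)" by (rule sum.swap)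
  also have "\<dots> = (\<Sum>i\<in>B. \<Sum>j\<in>C. \<Sum>t\<in>A. \<Sum>k\<in>D. \<Sum>l\<in>E. f t i j k l)" by (rule sum.cong[OF refl], rule sum.swap)
  also have "\<dots> = (\<Sum>i\<in>B. \<Sum>j\<in>C. \<Sum>k\<in>D. \<Sum>t\<in>A. \<Sum>l\<in>E. f t i j k l)" by (rule sum.cong[OF refl], rule sum.cong[OF refl], rule sum.swap)
  also have "\<dots> = (\<Sum>i\<in>B. \<Sum>j\<in>C. \<Sum>k\<in>D. \<Sum>l\<in>E. \<Sum>t\<in>A. f t i j k l)" by (rule sum.cong[OF refl], rule sum.cong[OF refl], rule sum.cong[OF refl], rule sum.swap)
  finally show ?thesis .
qed

lemma star:
  fixes Y :: "'k::finite \<Rightarrow> real^('n::{finite,linorder})^('m::{finite,linorder})"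
  assumes "\<forall>idx\<in>minor_indices. (\<Sum>t\<in>UNIV. minor2 idx (Y t)) = 0"
  shows "inner (phi Y x a) (phi Y y b) = inner (phi Y x b) (phi Y y a)"
proof -
  have "inner (phi Y x a) (phi Y y b) - inner (phi Y x b) (phi Y y a)
    = (\<Sum>t\<in>UNIV. inner x (Y t *v a) * inner y (Y t *v b) - inner x (Y t *v b) * inner y (Y t *v a))"
    by (simp add: phi_def inner_vec_def sum_subtractf)
  also have "\<dots> = (\<Sum>t\<in>UNIV. \<Sum>i\<in>UNIV. \<Sum>j\<in>UNIV. \<Sum>k\<in>UNIV. \<Sum>l\<in>UNIV. x$i*y$j*a$k*b$l * minor2 (i,j,k,l) (Y t))"
    by (rule sum.cong[OF refl], rule quad_expand)
  also have "\<dots> = (\<Sum>i\<in>UNIV. \<Sum>j\<in>UNIV. \<Sum>k\<in>UNIV. \<Sum>l\<in>UNIV. x$i*y$j*a$k*b$l * (\<Sum>t\<in>UNIV. minor2 (i,j,k,l) (Y t)))"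
    unfolding sum_distrib_left by (rule swap5)
  also have "\<dots> = 0" using minor2_all_zero[OF assms] by simp
  finally show ?thesis by simp
qed

lemma linear_mv_left: "linear (\<lambda>X::real^'n^'m. X *v a)"
  by (intro linearI) (simp_all add: matrix_vector_mult_add_rdistrib scaleR_matrix_vector_assoc)

lemma maxrank:
  fixes S :: "(real^'n^'m) set"
  assumes S: "subspace S" and mx: "\<forall>a'. dim ((\<lambda>X. X *v a') ` S) \<le> dim ((\<lambda>X. X *v a) ` S)"
    and X: "X \<in> S" "X *v a = 0" and x: "\<forall>w\<in>(\<lambda>X. X *v a) ` S. inner x w = 0"
  shows "inner x (X *v b) = 0"
proof (rule ccontr)
  assume g0: "inner x (X *v b) \<noteq> 0"
  define \<gamma> where "\<gamma> = inner x (X *v b)"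
  define A where "A = (\<lambda>X::real^'n^'m. X *v a)"
  define B where "B = (\<lambda>X::real^'n^'m. X *v b)"
  have lA: "linear A" and lB: "linear B" unfolding A_def B_def by (rule linear_mv_left)+
  define R where "R = A ` S"
  have sR: "subspace R" unfolding R_def by (rule linear_subspace_image[OF lA S])
  obtain g where g: "g ` UNIV \<subseteq> S" "linear g" "\<And>v. v \<in> A ` S \<Longrightarrow> A (g v) = v"
    using linear_exists_right_inverse_on[OF lA S] by blast
  define D where "D = g ` R"
  have sD: "subspace D" unfolding D_def by (rule linear_subspace_image[OF g(2) sR])
  have DS: "D \<subseteq> S" unfolding D_def using g(1) by auto
  have ginj: "inj_on g R" using g(3) unfolding R_def by (metis inj_on_inverseI)
  have dimD: "dim D = dim R"
    unfolding D_def using dim_image_eq[OF g(2), of R] ginj span_eq_iff[of R] sR by metis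
  have X0: "X \<noteq> 0" using g0 by auto
  have XD: "X \<notin> span D"
  proof
    assume "X \<in> span D"
    then have "X \<in> D" using sD span_eq_iff by blast
    then obtain v where v: "v \<in> R" "X = g v" unfolding D_def by auto
    then have "v = A X" using g(3) unfolding R_def by simp
    also have "\<dots> = 0" using X(2) unfolding A_def by simp
    finally show False using v X0 linear_0[OF g(2)] by simp
  qed
  define D' where "D' = span (insert X D)"
  have D'S: "D' \<subseteq> S" unfolding D'_def using DS X(1) S by (simp add: span_minimal)
  have dimD': "dim D' = dim R + 1" unfolding D'_def using XD dimD by (simp add: dim_insert)
  have blA: "bounded_linear A" using lA by (simp add: linear_conv_bounded_linear)
  have AinjD: "\<forall>d\<in>D. A d = 0 \<longrightarrow> d = 0"
  proof (intro ballI impI)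
    fix d assume "d \<in> D" "A d = 0"
    then obtain v where v: "v \<in> R" "d = g v" unfolding D_def by auto
    then have "v = A d" using g(3) unfolding R_def by simp
    then show "d = 0" using v \<open>A d = 0\<close> linear_0[OF g(2)] by simp
  qed
  obtain e where e: "e > 0" "\<And>d. d \<in> D \<Longrightarrow> norm (A d) \<ge> e * norm d"
    using injective_imp_isometric[OF closed_subspace[OF sD] sD blA AinjD] by blast
  define B' where "B' = (\<lambda>d. B d - (inner x (B d) / \<gamma>) *\<^sub>R B X)"
  have lB': "linear B'"
  proof (rule linearI)
    fix u v show "B' (u + v) = B' u + B' v"
      unfolding B'_def by (simp add: linear_add[OF lB] inner_add_right add_divide_distrib scaleR_add_left)
  next
    fix r u show "B' (r *\<^sub>R u) = r *\<^sub>R B' u"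
      unfolding B'_def by (simp add: linear_cmul[OF lB] scaleR_diff_right)
  qed
  obtain C where C: "C > 0" "\<And>d. norm (B' d) \<le> norm d * C"
    using bounded_linear.pos_bounded[of B'] lB' by (auto simp: linear_conv_bounded_linear)
  define t where "t = e / (2 * C)"
  have t0: "t > 0" unfolding t_def using e C by simp
  define At where "At = (\<lambda>Y::real^'n^'m. Y *v (a + t *\<^sub>R b))"
  have lAt: "linear At" unfolding At_def by (rule linear_mv_left)
  have AtAB: "At Y = A Y + t *\<^sub>R B Y" for Y
    unfolding At_def A_def B_def by (simp add: matrix_vector_right_distrib matrix_vector_mult_scaleR)
  have injD': "inj_on At D'"
    unfolding linear_inj_on_iff_eq_0[OF lAt subspace_span[of "insert X D"], folded D'_def]
  proof (intro ballI impI)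
    fix w assume w: "w \<in> D'" "At w = 0"
    then obtain s where "w - s *\<^sub>R X \<in> span D" unfolding D'_def span_insert by auto
    then have dD: "w - s *\<^sub>R X \<in> D" using sD span_eq_iff by blast
    define d where "d = w - s *\<^sub>R X"
    have wd: "w = d + s *\<^sub>R X" unfolding d_def by simp
    have dD': "d \<in> D" using dD d_def by simp
    have AX: "A X = 0" using X(2) unfolding A_def by simp
    have eq: "A d + t *\<^sub>R B d + (s * t) *\<^sub>R B X = 0"
    proof -
      have "At w = A d + s *\<^sub>R A X + t *\<^sub>R (B d + s *\<^sub>R B X)"
        unfolding AtAB wd by (simp add: linear_add[OF lA] linear_add[OF lB] linear_cmul[OF lA] linear_cmul[OF lB])
      then have "0 = A d + t *\<^sub>R (B d + s *\<^sub>R B X)" using w(2) AX by simp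
      then show ?thesis by (simp add: scaleR_add_right add.assoc mult.commute)
    qed
    have xAd: "inner x (A d) = 0" using x dD' DS unfolding A_def by auto
    have "inner x (A d + t *\<^sub>R B d + (s * t) *\<^sub>R B X) = 0" using eq by simp
    then have "t * (inner x (B d) + s * \<gamma>) = 0"
      using xAd unfolding \<gamma>_def B_def by (simp add: inner_add_right algebra_simps)
    then have h1: "inner x (B d) + s * \<gamma> = 0" using t0 by simp
    have gne: "\<gamma> \<noteq> 0" using g0 unfolding \<gamma>_def by simp
    have s_eq: "s = - inner x (B d) / \<gamma>" using h1 gne by (simp add: field_simps)
    have "t *\<^sub>R B' d = t *\<^sub>R B d + (s * t) *\<^sub>R B X"
      unfolding B'_def s_eq by (simp add: scaleR_diff_right)
    then have "A d + t *\<^sub>R B' d = 0" using eq by (simp add: add.assoc)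
    then have "A d = - (t *\<^sub>R B' d)" by (simp add: eq_neg_iff_add_eq_0)
    then have "norm (A d) = t * norm (B' d)" using t0 by simp
    also have "\<dots> \<le> t * (norm d * C)" using C(2)[of d] t0 by (simp add: mult_left_mono)
    also have "\<dots> = e / 2 * norm d" unfolding t_def using C by (simp add: field_simps)
    finally have "e * norm d \<le> e / 2 * norm d" using e(2)[OF dD'] by linarith
    then have "e / 2 * norm d \<le> 0" by linarith
    then have "norm d \<le> 0" using e(1) by (simp add: mult_le_0_iff)
    then have "norm d = 0" by simp
    then have d0: "d = 0" by simp
    then have "s = 0" using s_eq linear_0[OF lB] by simp
    then show "w = 0" using wd d0 by simp
  qed
  have "dim (At ` D') = dim D'"
    using dim_image_eq[OF lAt, of "span (insert X D)"] injD' unfolding D'_def by (simp add: span_span)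
  moreover have "dim (At ` D') \<le> dim (At ` S)" using D'S by (intro dim_subset) auto
  moreover have "dim (At ` S) \<le> dim R" using mx unfolding At_def R_def A_def by blast
  ultimately show False using dimD' by simp
qed

definition Mc :: "('k::finite \<Rightarrow> real^'n^'m) \<Rightarrow> real^'k \<Rightarrow> real^'n^'m" where
  "Mc Y c = (\<Sum>t\<in>UNIV. c$t *\<^sub>R Y t)"

lemma inner_phi: "inner c (phi Y x b) = inner x (Mc Y c *v b)"
proof -
  have "Mc Y c *v b = (\<Sum>t\<in>UNIV. c$t *\<^sub>R (Y t *v b))"
    unfolding Mc_def using linear_sum[OF linear_mv_left[of b], of "\<lambda>t. c$t *\<^sub>R Y t" UNIV]
      by (simp add: o_def scaleR_matrix_vector_assoc[symmetric])
  moreover have "inner c (phi Y x b) = (\<Sum>t\<in>UNIV. c$t * inner x (Y t *v b))"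
    by (simp add: phi_def inner_vec_def)
  ultimately show ?thesis by (simp add: inner_sum_right)
qed

lemma Mc_span: "Mc Y c \<in> span (range Y)"
  unfolding Mc_def by (intro span_sum span_scale span_base) auto

lemma phi_add: "phi Y (x + y) b = phi Y x b + phi Y y b"
  by (simp add: phi_def vec_eq_iff inner_add_left)
lemma phi_diff: "phi Y (x - y) b = phi Y x b - phi Y y b"
  by (simp add: phi_def vec_eq_iff inner_diff_left)
lemma phi_scale: "phi Y (r *\<^sub>R x) b = r *\<^sub>R phi Y x b"
  by (simp add: phi_def vec_eq_iff)
lemma linear_phi: "linear (\<lambda>x. phi Y x b)"
  by (intro linearI) (simp_all add: phi_add phi_scale)

lemma vec_eq_by_inner: "(\<And>x. inner x p = inner x q) \<Longrightarrow> p = q" for p q :: "'a::real_inner"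
  by (metis inner_diff_right inner_eq_zero_iff right_minus_eq)

definition ST :: "('k::finite \<Rightarrow> real^'n^'m) \<Rightarrow> bool" where
  "ST Y \<longleftrightarrow> (\<forall>x a y b. inner (phi Y x a) (phi Y y b) = inner (phi Y x b) (phi Y y a))"

lemma F_lemma:
  assumes ST: "ST Y"
    and mx: "\<forall>a'. dim ((\<lambda>X. X *v a') ` span (range Y)) \<le> dim ((\<lambda>X. X *v a) ` span (range Y))"
    and x: "\<forall>w\<in>(\<lambda>X. X *v a) ` span (range Y). inner x w = 0"
  shows "phi Y x b = 0"
proof -
  define v where "v = phi Y x b"
  define Z where "Z = Mc Y v"
  have ZK: "Z \<in> span (range Y)" unfolding Z_def by (rule Mc_span)
  have pa0: "phi Y x a = 0"
  proof -
    have "inner x (Y i *v a) = 0" for i using x span_base[OF rangeI, of Y i] by blast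
    then show ?thesis by (simp add: phi_def vec_eq_iff)
  qed
  have "inner z (Z *v a) = 0" for z
  proof -
    have "inner z (Z *v a) = inner v (phi Y z a)" unfolding Z_def by (simp add: inner_phi)
    also have "\<dots> = inner (phi Y x a) (phi Y z b)" unfolding v_def using ST unfolding ST_def by metis
    finally show ?thesis using pa0 by simp
  qed
  then have Za: "Z *v a = 0" by (metis inner_eq_zero_iff)
  have "inner x (Z *v b) = 0" by (rule maxrank[OF subspace_span mx ZK Za x])
  then have "inner v v = 0" unfolding Z_def by (simp add: inner_phi[symmetric] v_def)
  then show ?thesis unfolding v_def by simp
qed

lemma colsub:
  assumes ST: "ST Y"
    and mx: "\<forall>a'. dim ((\<lambda>X. X *v a') ` span (range Y)) \<le> dim ((\<lambda>X. X *v a) ` span (range Y))"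
    and XK: "X \<in> span (range Y)"
  shows "X *v b \<in> (\<lambda>X. X *v a) ` span (range Y)"
proof -
  define W where "W = (\<lambda>X. X *v a) ` span (range Y)"
  have sW: "subspace W" unfolding W_def by (rule linear_subspace_image[OF linear_mv_left subspace_span])
  have base: "Y t *v b \<in> W" for t
  proof -
    obtain y z where yz: "y \<in> span W" "\<And>w. w \<in> span W \<Longrightarrow> orthogonal z w" "Y t *v b = y + z"
      using orthogonal_subspace_decomp_exists[of W "Y t *v b"] by blast
    have "\<forall>w\<in>W. inner z w = 0" using yz(2) span_base unfolding orthogonal_def by blast
    then have "phi Y z b = 0" using F_lemma[OF ST mx] unfolding W_def by blast
    then have "inner z (Y t *v b) = 0" by (simp add: phi_def vec_eq_iff)
    moreover have "inner z y = 0" using yz(1,2) unfolding orthogonal_def by blast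
    ultimately have "inner z z = 0" using yz(3) by (simp add: inner_add_right)
    then have "z = 0" by simp
    moreover have "span W = W" using sW span_eq_iff by blast
    ultimately show ?thesis using yz(1,3) \<open>z = 0\<close> by (metis add.right_neutral)
  qed
  have "subspace {X. X *v b \<in> W}"
    using sW unfolding subspace_def
    by (auto simp: matrix_vector_mult_add_rdistrib scaleR_matrix_vector_assoc[symmetric])
  then have "span (range Y) \<subseteq> {X. X *v b \<in> W}" using base by (intro span_minimal) auto
  then show ?thesis using XK unfolding W_def by blast
qed


lemma rank_one_if_span1:
  fixes Z :: "real^'n^'m"
  assumes "Z \<noteq> 0" "\<And>l. Z *v axis l 1 \<in> span {w}"
  shows "rank Z = 1"
proof -
  have "Z *v b \<in> span {w}" for b
  proof -
    have "Z *v b = (\<Sum>l\<in>UNIV. b$l *\<^sub>R (Z *v axis l 1))"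
      unfolding matrix_vector_mult_basis by (simp add: matrix_mult_sum scalar_mult_eq_scaleR)
    also have "\<dots> \<in> span {w}" using assms(2) by (intro span_sum span_scale) auto
    finally show ?thesis .
  qed
  then have "range (\<lambda>x. Z *v x) \<subseteq> span {w}" by auto
  then have "dim (range (\<lambda>x. Z *v x)) \<le> dim (span {w})" by (rule dim_subset)
  also have "\<dots> \<le> 1" by simp
  finally have "rank Z \<le> 1" by (simp add: rank_dim_range)
  moreover have "rank Z \<noteq> 0" using assms(1) rank_eq_0 by blast
  ultimately show ?thesis by simp
qed

lemma inj_case:
  fixes Y :: "'k::finite \<Rightarrow> real^('n::{finite,linorder})^'m"
  assumes ST: "ST Y"
    and injK: "\<forall>X\<in>span (range Y). X *v a = 0 \<longrightarrow> X = 0"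
    and ne: "span (range Y) \<noteq> {0}"
  shows "\<exists>Z\<in>span (range Y). rank Z = 1"
proof -
  have STi: "inner (phi Y x a') (phi Y y b') = inner (phi Y x b') (phi Y y a')" for x y a' b'
    using ST unfolding ST_def by blast
  define U where "U = range (\<lambda>x. phi Y x a)"
  have sU: "subspace U" unfolding U_def by (rule linear_subspace_image[OF linear_phi subspace_UNIV])
  have spU: "span U = U" using sU span_eq_iff by blast
  have R: "phi Y x b \<in> U" for x b
  proof -
    obtain v1 v2 where v: "v1 \<in> span U" "\<And>w. w \<in> span U \<Longrightarrow> orthogonal v2 w" "phi Y x b = v1 + v2"
      using orthogonal_subspace_decomp_exists[of U "phi Y x b"] by blast
    have "inner z (Mc Y v2 *v a) = 0" for z
    proof -
      have "phi Y z a \<in> span U" unfolding U_def by (simp add: span_base)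
      then have "inner v2 (phi Y z a) = 0" using v(2) unfolding orthogonal_def by blast
      then show ?thesis by (simp add: inner_phi)
    qed
    then have "Mc Y v2 *v a = 0" by (metis inner_eq_zero_iff)
    then have M0: "Mc Y v2 = 0" using injK Mc_span by blast
    have "inner v2 (phi Y x b) = 0" by (simp add: inner_phi M0)
    moreover have "inner v2 v1 = 0" using v(1,2) unfolding orthogonal_def by blast
    ultimately have "inner v2 v2 = 0" using v(3) by (simp add: inner_add_right)
    then show ?thesis using v(1,3) spU by simp
  qed
  have Z0: "phi Y z b = 0" if "phi Y z a = 0" for z b
  proof -
    obtain y where y: "phi Y z b = phi Y y a" using R[of z b] unfolding U_def by blast
    have "inner (phi Y z b) (phi Y z b) = inner (phi Y z b) (phi Y y a)" using y by simp
    also have "\<dots> = inner (phi Y z a) (phi Y y b)" using STi by metis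
    finally show ?thesis using that by simp
  qed
  obtain g where g: "linear g" "\<And>v. v \<in> U \<Longrightarrow> phi Y (g v) a = v"
    using linear_exists_right_inverse_on[OF linear_phi[of Y a] subspace_UNIV] unfolding U_def by blast
  define T where "T = (\<lambda>b v. phi Y (g v) b)"
  have Tphi: "T b (phi Y x a) = phi Y x b" for b x
  proof -
    have "phi Y (g (phi Y x a) - x) a = 0" using g(2)[of "phi Y x a"] unfolding U_def phi_diff by simp
    then have "phi Y (g (phi Y x a) - x) b = 0" by (rule Z0)
    then show ?thesis unfolding T_def phi_diff by simp
  qed
  have Tlin: "linear (T b)" for b
    unfolding T_def using linear_compose[OF g(1) linear_phi[of Y b]] by (simp add: o_def)
  have TU: "T b u \<in> U" for b u unfolding T_def by (rule R)
  have Tsa: "inner (T b u) w = inner u (T b w)" if "u \<in> U" "w \<in> U" for b u w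
  proof -
    have "inner (T b u) w = inner (phi Y (g u) b) (phi Y (g w) a)" unfolding T_def using g(2)[OF that(2)] by simp
    also have "\<dots> = inner (phi Y (g u) a) (phi Y (g w) b)" using STi by metis
    also have "\<dots> = inner u (T b w)" unfolding T_def using g(2)[OF that(1)] by simp
    finally show ?thesis .
  qed
  have Tcomm: "T c (T b u) = T b (T c u)" if uU: "u \<in> U" for b c u
  proof -
    obtain x where x: "u = phi Y x a" using uU unfolding U_def by blast
    obtain x1 where x1: "phi Y x b = phi Y x1 a" using R[of x b] unfolding U_def by blast
    obtain x2 where x2: "phi Y x c = phi Y x2 a" using R[of x c] unfolding U_def by blast
    have e1: "T c (T b u) = phi Y x1 c" unfolding x Tphi x1 by simp
    have e2: "T b (T c u) = phi Y x2 b" unfolding x Tphi x2 by simp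
    have "inner (phi Y x1 c - phi Y x2 b) w = 0" if "w \<in> U" for w
    proof -
      obtain y where y: "w = phi Y y a" using \<open>w \<in> U\<close> unfolding U_def by blast
      have "inner (phi Y x1 c) (phi Y y a) = inner (phi Y x1 a) (phi Y y c)" using STi by metis
      also have "\<dots> = inner (phi Y x b) (phi Y y c)" using x1 by simp
      also have "\<dots> = inner (phi Y x c) (phi Y y b)" using STi by metis
      also have "\<dots> = inner (phi Y x2 a) (phi Y y b)" using x2 by simp
      also have "\<dots> = inner (phi Y x2 b) (phi Y y a)" using STi by metis
      finally show ?thesis unfolding y by (simp add: inner_diff_left)
    qed
    moreover have "phi Y x1 c - phi Y x2 b \<in> U" using R sU by (simp add: subspace_diff)
    ultimately have "inner (phi Y x1 c - phi Y x2 b) (phi Y x1 c - phi Y x2 b) = 0" by blast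
    then show ?thesis using e1 e2 by simp
  qed
  define Ts where "Ts = map (\<lambda>l. T (axis l 1)) (sorted_list_of_set (UNIV::'n set))"
  have setTs: "set Ts = (\<lambda>l. T (axis l 1)) ` UNIV" unfolding Ts_def by simp
  have "U \<noteq> {0}"
  proof
    assume U0: "U = {0}"
    have "phi Y x a = 0" for x using U0 unfolding U_def by auto
    then have "phi Y x b = 0" for x b using Z0 by blast
    then have "inner x (Y t *v b) = 0" for x t b by (simp add: phi_def vec_eq_iff)
    then have "Y t *v b = 0" for t b by (metis inner_eq_zero_iff)
    moreover have "(Y t *v axis j 1) $ i = Y t $ i $ j" for t i j by (simp add: matrix_vector_mult_basis column_def)
    ultimately have "Y t = 0" for t by (simp add: vec_eq_iff)
    then have "range Y \<subseteq> {0}" by auto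
    then have "span (range Y) \<subseteq> span {0}" by (rule span_mono)
    then have "span (range Y) \<subseteq> {0}" by simp
    then show False using ne span_0[of "range Y"] by blast
  qed
  then obtain u where u: "u \<in> U" "u \<noteq> 0" "\<forall>T\<in>set Ts. \<exists>\<mu>. T u = \<mu> *\<^sub>R u"
    using common_eigen[OF sU, of Ts] Tlin TU Tsa Tcomm unfolding setTs by blast
  define Z where "Z = Mc Y u"
  have "u \<in> range (\<lambda>x. phi Y x a)" using u(1) unfolding U_def .
  then obtain x0 where x0: "u = phi Y x0 a" by blast
  have "inner x0 (Z *v a) = inner u u" unfolding Z_def by (simp add: inner_phi[symmetric] x0)
  then have "Z *v a \<noteq> 0" using u(2) by auto
  then have Znz: "Z \<noteq> 0" by auto
  have "Z *v axis l 1 \<in> span {Z *v a}" for l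
  proof -
    obtain \<mu> where mu: "T (axis l 1) u = \<mu> *\<^sub>R u" using u(3) unfolding setTs by blast
    have "inner x (Z *v axis l 1) = inner x (\<mu> *\<^sub>R (Z *v a))" for x
    proof -
      have "inner x (Z *v axis l 1) = inner u (phi Y x (axis l 1))" unfolding Z_def by (simp add: inner_phi)
      also have "\<dots> = inner u (T (axis l 1) (phi Y x a))" by (simp add: Tphi)
      also have "\<dots> = inner (T (axis l 1) u) (phi Y x a)" using Tsa[OF u(1), of "phi Y x a" "axis l 1"] unfolding U_def by simp
      also have "\<dots> = \<mu> * inner u (phi Y x a)" using mu by simp
      also have "\<dots> = inner x (\<mu> *\<^sub>R (Z *v a))" unfolding Z_def by (simp add: inner_phi)
      finally show ?thesis .
    qed
    then have "Z *v axis l 1 = \<mu> *\<^sub>R (Z *v a)" by (rule vec_eq_by_inner)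
    then show ?thesis by (simp add: span_base span_scale)
  qed
  then have "rank Z = 1" using Znz by (rule rank_one_if_span1[rotated])
  then show ?thesis using Mc_span unfolding Z_def by blast
qed


lemma dim_image_lt:
  fixes f :: "'a::euclidean_space \<Rightarrow> 'b::euclidean_space"
  assumes lf: "linear f" and S: "subspace S" and x: "x \<in> S" "x \<noteq> 0" "f x = 0"
  shows "dim (f ` S) < dim S"
proof -
  have "independent {x}" using x(2) by simp
  then obtain B where B: "{x} \<subseteq> B" "B \<subseteq> S" "independent B" "S \<subseteq> span B"
    using maximal_independent_subset_extend[of "{x}" S] x(1) by blast
  have fB: "finite B" using independent_bound[OF B(3)] by blast
  have cB: "card B = dim S" using basis_card_eq_dim[OF B(2) B(4) B(3)] .
  have "f ` S \<subseteq> f ` span B" using B(4) by auto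
  also have "\<dots> = span (f ` B)" using linear_span_image[OF lf] by simp
  also have "\<dots> \<subseteq> span (f ` (B - {x}))"
  proof (rule span_minimal)
    show "f ` B \<subseteq> span (f ` (B - {x}))"
    proof
      fix y assume "y \<in> f ` B"
      then obtain z where z: "z \<in> B" "y = f z" by auto
      show "y \<in> span (f ` (B - {x}))"
      proof (cases "z = x")
        case True then show ?thesis using z x(3) span_0 by simp
      next
        case False then show ?thesis using z by (intro span_base) auto
      qed
    qed
  qed simp
  finally have "dim (f ` S) \<le> card (f ` (B - {x}))" using fB by (intro dim_le_card) auto
  also have "\<dots> \<le> card (B - {x})" using fB by (intro card_image_le) auto
  also have "\<dots> < card B" using fB B(1) by (metis card_Diff1_less insert_subset)
  finally show ?thesis using cB by simp
qed

lemma one_side: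
  fixes Y :: "'k::finite \<Rightarrow> real^('n::{finite,linorder})^'m"
  assumes ST: "ST Y" and ne: "span (range Y) \<noteq> {0}" and d3: "dim (span (range Y)) \<le> 3"
    and NR: "\<forall>Z\<in>span (range Y). rank Z \<noteq> 1"
  shows "\<exists>W. subspace W \<and> dim W = 2 \<and> dim (span (range Y)) = 3 \<and> (\<forall>X\<in>span (range Y). \<forall>b. X *v b \<in> W)"
proof -
  define KK where "KK = span (range Y)"
  have sK: "subspace KK" unfolding KK_def by simp
  define img where "img = (\<lambda>a'. (\<lambda>X. X *v a') ` KK)"
  have dle: "dim (img a') \<le> dim KK" for a' unfolding img_def by (rule dim_image_le[OF linear_mv_left])
  define DS where "DS = (\<lambda>a'. dim (img a')) ` UNIV"
  have "DS \<subseteq> {..dim KK}" using dle unfolding DS_def by auto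
  then have fin: "finite DS" by (rule finite_subset) simp
  have "Max DS \<in> DS" using fin unfolding DS_def by (intro Max_in) auto
  then obtain a where a: "dim (img a) = Max DS" unfolding DS_def by auto
  have mx: "\<forall>a'. dim (img a') \<le> dim (img a)"
  proof
    fix a'
    have "dim (img a') \<in> DS" unfolding DS_def by simp
    then have "dim (img a') \<le> Max DS" using Max_ge[OF fin] by blast
    then show "dim (img a') \<le> dim (img a)" using a by simp
  qed
  have cols: "\<forall>X\<in>KK. \<forall>b. X *v b \<in> img a"
    using colsub[OF ST] mx unfolding img_def KK_def by blast
  have sW: "subspace (img a)" unfolding img_def by (rule linear_subspace_image[OF linear_mv_left sK])
  obtain X0 where X0: "X0 \<in> KK" "X0 \<noteq> 0" using ne subspace_0[OF sK] unfolding KK_def by blast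
  have rk: "rank X \<le> dim (img a)" if "X \<in> KK" for X
  proof -
    have "range (\<lambda>x. X *v x) \<subseteq> img a" using cols that by auto
    then show ?thesis unfolding rank_dim_range by (rule dim_subset)
  qed
  have c1: "dim (img a) \<noteq> dim KK"
  proof
    assume eq: "dim (img a) = dim KK"
    have "\<forall>X\<in>KK. X *v a = 0 \<longrightarrow> X = 0"
    proof (intro ballI impI, rule ccontr)
      fix X assume "X \<in> KK" "X *v a = 0" "X \<noteq> 0"
      then have "dim (img a) < dim KK" unfolding img_def
        by (intro dim_image_lt[OF linear_mv_left sK]) auto
      then show False using eq by simp
    qed
    then obtain Z where "Z \<in> KK" "rank Z = 1" using inj_case[OF ST _ ne] unfolding KK_def by blast
    then show False using NR unfolding KK_def by blast
  qed
  have c2: "\<not> dim (img a) \<le> 1"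
  proof
    assume "dim (img a) \<le> 1"
    then have "rank X0 \<le> 1" using rk[OF X0(1)] by simp
    moreover have "rank X0 \<noteq> 0" using X0(2) rank_eq_0 by blast
    ultimately have "rank X0 = 1" by linarith
    then show False using NR X0(1) unfolding KK_def by blast
  qed
  have d3': "dim KK \<le> 3" using d3 unfolding KK_def .
  have "dim (img a) = 2" "dim KK = 3" using c1 c2 dle[of a] d3' by linarith+
  then show ?thesis using sW cols unfolding KK_def by blast
qed

lemma onb2:
  fixes W :: "'a::euclidean_space set"
  assumes sW: "subspace W" and dW: "dim W = 2"
  obtains e1 e2 where "e1 \<in> W" "e2 \<in> W" "inner e1 e1 = 1" "inner e2 e2 = 1" "inner e1 e2 = 0"
    "\<And>u. u \<in> W \<Longrightarrow> u = inner e1 u *\<^sub>R e1 + inner e2 u *\<^sub>R e2"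
proof -
  obtain B where B: "B \<subseteq> W" "pairwise orthogonal B" "\<And>x. x \<in> B \<Longrightarrow> norm x = 1"
    "independent B" "card B = dim W" "span B = W"
    using orthonormal_basis_subspace[OF sW] by blast
  obtain e1 e2 where e: "B = {e1, e2}" "e1 \<noteq> e2" using B(5) dW card_2_iff by metis
  have n1: "inner e1 e1 = 1" using B(3)[of e1] e(1) by (simp add: dot_square_norm)
  have n2: "inner e2 e2 = 1" using B(3)[of e2] e(1) by (simp add: dot_square_norm)
  have o12: "inner e1 e2 = 0" using B(2) e unfolding pairwise_def orthogonal_def by auto
  have dec: "u = inner e1 u *\<^sub>R e1 + inner e2 u *\<^sub>R e2" if u: "u \<in> W" for u
  proof -
    define r where "r = u - inner e1 u *\<^sub>R e1 - inner e2 u *\<^sub>R e2"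
    have e1W: "e1 \<in> span B" "e2 \<in> span B" using e(1) span_base[of _ B] by auto
    have rB: "r \<in> span B" unfolding r_def using u B(6) e1W
      by (intro span_diff span_scale) auto
    have "orthogonal r y" if "y \<in> B" for y
    proof -
      have "y = e1 \<or> y = e2" using that e(1) by auto
      moreover have "inner r e1 = 0" unfolding r_def using n1 o12
        by (simp add: inner_diff_left inner_commute[of e2 e1] inner_commute[of u e1])
      moreover have "inner r e2 = 0" unfolding r_def using n2 o12
        by (simp add: inner_diff_left inner_commute[of u e2])
      ultimately show ?thesis unfolding orthogonal_def by auto
    qed
    then have "orthogonal r r" using orthogonal_to_span[OF rB] by blast
    then have "r = 0" by (simp add: orthogonal_def)
    then show ?thesis unfolding r_def by (simp add: algebra_simps)
  qed
  show ?thesis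
    using that[of e1 e2] B(1) e(1) n1 n2 o12 dec by auto
qed

lemma span1_of_det0:
  fixes e1 e2 :: "'a::real_vector"
  assumes "a * d = b * c"
  shows "\<exists>w. a *\<^sub>R e1 + c *\<^sub>R e2 \<in> span {w} \<and> b *\<^sub>R e1 + d *\<^sub>R e2 \<in> span {w}"
proof (cases "a = 0 \<and> c = 0")
  case True
  then show ?thesis by (intro exI[of _ "b *\<^sub>R e1 + d *\<^sub>R e2"]) (simp add: span_base span_0)
next
  case False
  show ?thesis
  proof (intro exI[of _ "a *\<^sub>R e1 + c *\<^sub>R e2"] conjI)
    show "a *\<^sub>R e1 + c *\<^sub>R e2 \<in> span {a *\<^sub>R e1 + c *\<^sub>R e2}" by (simp add: span_base)
    show "b *\<^sub>R e1 + d *\<^sub>R e2 \<in> span {a *\<^sub>R e1 + c *\<^sub>R e2}"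
    proof (cases "a = 0")
      case False
      have "b *\<^sub>R e1 + d *\<^sub>R e2 = (b / a) *\<^sub>R (a *\<^sub>R e1 + c *\<^sub>R e2)"
        using False assms by (simp add: scaleR_add_right field_simps)
      then show ?thesis by (metis span_base span_scale singletonI)
    next
      case True
      with \<open>\<not> (a = 0 \<and> c = 0)\<close> have c0: "c \<noteq> 0" by simp
      have b0: "b = 0" using assms True c0 by simp
      have "b *\<^sub>R e1 + d *\<^sub>R e2 = (d / c) *\<^sub>R (a *\<^sub>R e1 + c *\<^sub>R e2)"
        using True b0 c0 by simp
      then show ?thesis by (metis span_base span_scale singletonI)
    qed
  qed
qed

lemma tinner: "inner x (transpose A *v a) = inner a (A *v x)" for A :: "real^'n^'m"
  using dot_lmul_matrix[of a A x] by (simp add: inner_commute)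


lemma final22:
  fixes KK :: "(real^'n^'m) set"
  assumes sK: "subspace KK" and dK: "dim KK = 3"
    and sW: "subspace W" and dW: "dim W = 2" and cW: "\<forall>X\<in>KK. \<forall>b. X *v b \<in> W"
    and sV: "subspace V" and dV: "dim V = 2" and cV: "\<forall>X\<in>KK. \<forall>b. transpose X *v b \<in> V"
  shows "\<exists>Z\<in>KK. rank Z = 1"
proof -
  obtain e1 e2 where e: "inner e1 e1 = 1" "inner e2 e2 = 1" "inner e1 e2 = 0"
    "\<And>u. u \<in> W \<Longrightarrow> u = inner e1 u *\<^sub>R e1 + inner e2 u *\<^sub>R e2"
    using onb2[OF sW dW] by metis
  obtain f1 f2 where f: "inner f1 f1 = 1" "inner f2 f2 = 1" "inner f1 f2 = 0"
    "\<And>u. u \<in> V \<Longrightarrow> u = inner f1 u *\<^sub>R f1 + inner f2 u *\<^sub>R f2"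
    using onb2[OF sV dV] by metis
  have Xdec: "X *v y = inner f1 y *\<^sub>R (X *v f1) + inner f2 y *\<^sub>R (X *v f2)" if X: "X \<in> KK" for X y
  proof -
    define z where "z = y - inner f1 y *\<^sub>R f1 - inner f2 y *\<^sub>R f2"
    have zf1: "inner f1 z = 0" unfolding z_def using f(1,3) by (simp add: inner_diff_right)
    have zf2: "inner f2 z = 0" unfolding z_def using f(2,3) by (simp add: inner_diff_right inner_commute[of f2 f1])
    have "(X *v z) $ i = 0" for i
    proof -
      have "(X *v z) $ i = inner (axis i 1) (X *v z)" by (simp add: inner_axis')
      also have "\<dots> = inner z (transpose X *v axis i 1)" by (rule tinner[symmetric])
      also have "\<dots> = 0"
      proof -
        have r: "transpose X *v axis i 1 \<in> V" using cV X by blast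
        have "inner z (transpose X *v axis i 1) = inner f1 (transpose X *v axis i 1) * inner z f1 + inner f2 (transpose X *v axis i 1) * inner z f2"
          by (subst f(4)[OF r]) (simp add: inner_add_right)
        then show ?thesis using zf1 zf2 by (simp add: inner_commute)
      qed
      finally show ?thesis .
    qed
    then have Xz: "X *v z = 0" by (simp add: vec_eq_iff)
    have "y = inner f1 y *\<^sub>R f1 + inner f2 y *\<^sub>R f2 + z" unfolding z_def by simp
    then have "X *v y = X *v ((inner f1 y *\<^sub>R f1 + inner f2 y *\<^sub>R f2) + z)"
      by (rule arg_cong)
    also have "\<dots> = X *v (inner f1 y *\<^sub>R f1 + inner f2 y *\<^sub>R f2) + X *v z"
      by (rule matrix_vector_right_distrib)
    finally have "X *v y = X *v (inner f1 y *\<^sub>R f1 + inner f2 y *\<^sub>R f2) + X *v z" .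
    then show ?thesis using Xz by (simp add: matrix_vector_right_distrib matrix_vector_mult_scaleR)
  qed
  define al where "al = (\<lambda>X::real^'n^'m. inner e1 (X *v f1))"
  define be where "be = (\<lambda>X::real^'n^'m. inner e1 (X *v f2))"
  define ga where "ga = (\<lambda>X::real^'n^'m. inner e2 (X *v f1))"
  define de where "de = (\<lambda>X::real^'n^'m. inner e2 (X *v f2))"
  have ipa: "inner p ((X + Y) *v q) = inner p (X *v q) + inner p (Y *v q)" for p q and X Y :: "real^'n^'m"
    by (simp add: matrix_vector_mult_add_rdistrib inner_add_right)
  have ipd: "inner p ((X - Y) *v q) = inner p (X *v q) - inner p (Y *v q)" for p q and X Y :: "real^'n^'m"
    by (simp add: matrix_vector_mult_diff_rdistrib inner_diff_right)
  have ips: "inner p ((c *\<^sub>R X) *v q) = c * inner p (X *v q)" for p q c and X :: "real^'n^'m"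
    by (simp add: scaleR_matrix_vector_assoc[symmetric])
  define D where "D = (\<lambda>X. al X * de X - be X * ga X)"
  have Xf1: "X *v f1 = al X *\<^sub>R e1 + ga X *\<^sub>R e2" if "X \<in> KK" for X
  proof -
    have "X *v f1 \<in> W" using cW that by blast
    then show ?thesis unfolding al_def ga_def by (rule e(4))
  qed
  have Xf2: "X *v f2 = be X *\<^sub>R e1 + de X *\<^sub>R e2" if "X \<in> KK" for X
  proof -
    have "X *v f2 \<in> W" using cW that by blast
    then show ?thesis unfolding be_def de_def by (rule e(4))
  qed
  have nz: "al X \<noteq> 0 \<or> be X \<noteq> 0 \<or> ga X \<noteq> 0 \<or> de X \<noteq> 0" if "X \<in> KK" "X \<noteq> 0" for X
  proof (rule ccontr)
    assume "\<not> ?thesis"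
    then have "al X = 0" "be X = 0" "ga X = 0" "de X = 0" by simp_all
    then have "X *v f1 = 0" "X *v f2 = 0" using Xf1[OF that(1)] Xf2[OF that(1)] by simp_all
    then have "X *v y = 0" for y by (subst Xdec[OF that(1)]) simp
    then have "(X *v axis j 1) $ i = 0" for i j by simp
    moreover have "(X *v axis j 1) $ i = X $ i $ j" for i j by (simp add: matrix_vector_mult_basis column_def)
    ultimately have "X = 0" by (simp add: vec_eq_iff)
    then show False using that(2) by simp
  qed
  have find: "\<exists>X\<in>KK. X \<noteq> 0 \<and> L X = 0" if lL: "linear L" for L :: "real^'n^'m \<Rightarrow> real \<times> real"
  proof (rule ccontr)
    assume "\<not> ?thesis"
    then have "inj_on L KK" using linear_inj_on_iff_eq_0[OF lL sK] by blast
    moreover have "span KK = KK" using sK span_eq_iff by blast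
    ultimately have "inj_on L (span KK)" by metis
    then have "dim (L ` KK) = dim KK" by (rule dim_image_eq[OF lL])
    moreover have "dim (L ` KK) \<le> 2" using dim_subset_UNIV[of "L ` KK"] by simp
    ultimately show False using dK by simp
  qed
  have l1: "linear (\<lambda>X. (al X - de X, be X + ga X))"
    unfolding al_def be_def ga_def de_def by (intro linearI) (simp_all add: ipa ips algebra_simps)
  have l2: "linear (\<lambda>X. (al X + de X, be X - ga X))"
    unfolding al_def be_def ga_def de_def by (intro linearI) (simp_all add: ipa ips algebra_simps)
  obtain X1 where X1: "X1 \<in> KK" "X1 \<noteq> 0" "al X1 = de X1" "be X1 = - ga X1"
    using find[OF l1] by (auto simp: zero_prod_def)
  obtain X2 where X2: "X2 \<in> KK" "X2 \<noteq> 0" "al X2 = - de X2" "be X2 = ga X2"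
    using find[OF l2] by (auto simp: zero_prod_def)
  have D1: "D X1 > 0"
  proof -
    have "D X1 = (al X1)^2 + (be X1)^2" unfolding D_def using X1 by (simp add: power2_eq_square)
    moreover have "al X1 \<noteq> 0 \<or> be X1 \<noteq> 0" using nz[OF X1(1,2)] X1(3,4) by auto
    ultimately show ?thesis using sum_power2_gt_zero_iff[of "al X1" "be X1"] by simp
  qed
  have D2: "D X2 < 0"
  proof -
    have "D X2 = - ((al X2)^2 + (be X2)^2)" unfolding D_def using X2 by (simp add: power2_eq_square)
    moreover have "al X2 \<noteq> 0 \<or> be X2 \<noteq> 0" using nz[OF X2(1,2)] X2(3,4) by auto
    ultimately show ?thesis using sum_power2_gt_zero_iff[of "al X2" "be X2"] by simp
  qed
  define P where "P = (\<lambda>s. X2 + s *\<^sub>R (X1 - X2))"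
  have hP: "inner p (P s *v q) = inner p (X2 *v q) + s * (inner p (X1 *v q) - inner p (X2 *v q))" for p q s
    unfolding P_def by (simp add: ipa ips ipd)
  have Pexp: "D (P s) = (al X2 + s * (al X1 - al X2)) * (de X2 + s * (de X1 - de X2))
       - (be X2 + s * (be X1 - be X2)) * (ga X2 + s * (ga X1 - ga X2))" for s
    unfolding D_def al_def be_def ga_def de_def by (simp only: hP)
  have cont: "continuous_on {0..1} (\<lambda>s. D (P s))"
    unfolding Pexp by (intro continuous_intros)
  have "D (P 0) \<le> 0" "0 \<le> D (P 1)" using D1 D2 unfolding P_def by auto
  then obtain s where s: "0 \<le> s" "s \<le> 1" "D (P s) = 0"
    using IVT'[of "\<lambda>s. D (P s)" 0 0 1] cont by auto
  define Z where "Z = P s"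
  have ZK: "Z \<in> KK" unfolding Z_def P_def using X1(1) X2(1) sK
    by (simp add: subspace_add subspace_scale subspace_diff)
  have Dscale: "D (c *\<^sub>R X) = c^2 * D X" for c X
    unfolding D_def al_def be_def ga_def de_def by (simp add: ips power2_eq_square algebra_simps)
  have Z0: "Z \<noteq> 0"
  proof
    assume "Z = 0"
    then have "(1 - s) *\<^sub>R X2 = (- s) *\<^sub>R X1" unfolding Z_def P_def by (simp add: algebra_simps)
    then have "D ((1 - s) *\<^sub>R X2) = D ((- s) *\<^sub>R X1)" by simp
    then have "(1 - s)^2 * D X2 = (- s)^2 * D X1" by (simp only: Dscale)
    then have "(1 - s)^2 * D X2 = s^2 * D X1" by simp
    moreover have "(1 - s)^2 * D X2 \<le> 0" using D2 by (simp add: mult_nonneg_nonpos)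
    moreover have "s^2 * D X1 \<ge> 0" using D1 by simp
    ultimately have "(1 - s)^2 * D X2 = 0" "s^2 * D X1 = 0" by linarith+
    then show False using D1 D2 by simp
  qed
  have det0: "al Z * de Z = be Z * ga Z" using s(3) unfolding Z_def D_def by simp
  obtain w where w: "al Z *\<^sub>R e1 + ga Z *\<^sub>R e2 \<in> span {w}" "be Z *\<^sub>R e1 + de Z *\<^sub>R e2 \<in> span {w}"
    using span1_of_det0[OF det0] by blast
  have "Z *v axis l 1 \<in> span {w}" for l
  proof -
    have "Z *v axis l 1 = inner f1 (axis l 1) *\<^sub>R (Z *v f1) + inner f2 (axis l 1) *\<^sub>R (Z *v f2)"
      by (rule Xdec[OF ZK])
    also have "\<dots> \<in> span {w}" using w Xf1[OF ZK] Xf2[OF ZK]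
      by (intro span_add span_scale) auto
    finally show ?thesis .
  qed
  then have "rank Z = 1" using Z0 by (rule rank_one_if_span1[rotated])
  then show ?thesis using ZK by blast
qed

lemma linear_transpose_real: "linear (transpose :: real^'n^'m \<Rightarrow> real^'m^'n)"
  by (intro linearI) (simp_all add: transpose_def vec_eq_iff)

lemma phi_transpose: "phi (\<lambda>t. transpose (Y t)) x a = phi Y a x"
  by (simp only: phi_def tinner)

lemma ST_transpose: "ST Y \<Longrightarrow> ST (\<lambda>t. transpose (Y t))"
  unfolding ST_def phi_transpose by (metis inner_commute)

lemma core:
  fixes Y :: "'k::finite \<Rightarrow> real^('n::{finite,linorder})^('m::{finite,linorder})"
  assumes minors: "\<forall>idx\<in>minor_indices. (\<Sum>t\<in>UNIV. minor2 idx (Y t)) = 0"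
    and YK: "\<And>t. Y t \<in> K" and sK: "subspace K" and dK: "dim K \<le> 3" and ne: "\<exists>t. Y t \<noteq> 0"
  shows "\<exists>Z\<in>K. rank Z = 1"
proof (rule ccontr)
  assume "\<not> ?thesis"
  then have NR: "\<forall>Z\<in>K. rank Z \<noteq> 1" by blast
  define KK where "KK = span (range Y)"
  have KKK: "KK \<subseteq> K" unfolding KK_def using YK sK by (intro span_minimal) auto
  have sKK: "subspace KK" unfolding KK_def by simp
  have dKK: "dim KK \<le> 3" using dim_subset[OF KKK] dK by simp
  have neK: "KK \<noteq> {0}" using ne span_base[of _ "range Y"] unfolding KK_def by blast
  have NRK: "\<forall>Z\<in>KK. rank Z \<noteq> 1" using NR KKK by blast
  have ST: "ST Y" unfolding ST_def using star[OF minors] by blast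
  obtain W where W: "subspace W" "dim W = 2" "dim KK = 3" "\<forall>X\<in>KK. \<forall>b. X *v b \<in> W"
    using one_side[OF ST neK[unfolded KK_def] dKK[unfolded KK_def] NRK[unfolded KK_def]]
    unfolding KK_def by blast
  define Y' where "Y' = (\<lambda>t. transpose (Y t))"
  have ST': "ST Y'" unfolding Y'_def by (rule ST_transpose[OF ST])
  have KK': "span (range Y') = transpose ` KK"
  proof -
    have "range Y' = transpose ` range Y" unfolding Y'_def by auto
    then show ?thesis unfolding KK_def using linear_span_image[OF linear_transpose_real] by simp
  qed
  have injT: "inj_on transpose (span KK)"
    by (simp add: inj_on_def)
  have dKK': "dim (span (range Y')) = dim KK"
    unfolding KK' using dim_image_eq[OF linear_transpose_real injT] .
  have neK': "span (range Y') \<noteq> {0}"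
  proof -
    obtain X where X: "X \<in> KK" "X \<noteq> 0" using neK subspace_0[OF sKK] by blast
    have "transpose X \<noteq> 0"
    proof
      assume "transpose X = 0"
      then have "X = 0" by (simp add: vec_eq_iff transpose_def)
      then show False using X(2) by simp
    qed
    then show ?thesis unfolding KK' using X(1) by blast
  qed
  have NRK': "\<forall>Z\<in>span (range Y'). rank Z \<noteq> 1" unfolding KK' using NRK by (auto simp: rank_transpose)
  obtain V where V: "subspace V" "dim V = 2" "\<forall>X\<in>span (range Y'). \<forall>b. X *v b \<in> V"
    using one_side[OF ST' neK' _ NRK'] dKK' dKK by auto
  have cV: "\<forall>X\<in>KK. \<forall>b. transpose X *v b \<in> V" using V(3) unfolding KK' by blast
  obtain Z where "Z \<in> KK" "rank Z = 1" using final22[OF sKK W(3) W(1) W(2) W(4) V(1) V(2) cV] by blast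
  then show False using NRK by blast
qed

definition muv :: "real^('n::{finite,linorder})^('m::{finite,linorder}) \<Rightarrow> real^('m \<times> 'm \<times> 'n \<times> 'n)" where
  "muv X = (\<chi> idx. if idx \<in> minor_indices then minor2 idx X else 0)"

lemma inner_muv: "inner \<beta> (muv X) = (\<Sum>idx\<in>minor_indices. \<beta>$idx * minor2 idx X)"
proof -
  have "inner \<beta> (muv X) = (\<Sum>idx\<in>UNIV. if idx \<in> minor_indices then \<beta>$idx * minor2 idx X else 0)"
    by (simp add: muv_def inner_vec_def if_distrib cong: if_cong)
  also have "\<dots> = (\<Sum>idx\<in>minor_indices. \<beta>$idx * minor2 idx X)"
    by (simp add: sum.inter_restrict[symmetric])
  finally show ?thesis .
qed

lemma minor2_scale: "minor2 idx (c *\<^sub>R X) = c^2 * minor2 idx X"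
  by (cases idx) (simp add: minor2_def power2_eq_square algebra_simps)

lemma muv_scale: "muv (c *\<^sub>R X) = c^2 *\<^sub>R muv X"
  by (simp add: muv_def vec_eq_iff minor2_scale)

lemma minor2_0: "minor2 idx 0 = 0"
  by (cases idx) (simp add: minor2_def)

lemma cont_muv:
  fixes S :: "(real^('n::{finite,linorder})^('m::{finite,linorder})) set"
  shows "continuous_on S muv"
  unfolding muv_def
proof (intro continuous_on_vec_lambda)
  fix idx :: "'m \<times> 'm \<times> 'n \<times> 'n"
  obtain i j k l where idx: "idx = (i,j,k,l)" by (cases idx)
  show "continuous_on S (\<lambda>X. if idx \<in> minor_indices then minor2 idx X else 0)"
    unfolding idx minor2_def by (cases "(i,j,k,l) \<in> minor_indices") (simp_all add: continuous_on_const continuous_intros continuous_on_id)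
qed

lemma card_option_UNIV: "CARD('a::finite option) = CARD('a) + 1"
proof -
  have "(UNIV :: 'a option set) = insert None (Some ` UNIV)" by (rule UNIV_option_conv)
  then show ?thesis by (simp add: card_image)
qed


lemma zero_in_hull_false:
  fixes K :: "(real^('n::{finite,linorder})^('m::{finite,linorder})) set"
  assumes sK: "subspace K" and dK: "dim K \<le> 3" and NR: "\<not> has_rank1_connections K"
    and H: "0 \<in> convex hull (muv ` (K \<inter> sphere 0 1))"
  shows False
proof -
  let ?S = "K \<inter> sphere 0 1"
  have "0 \<in> {x. \<exists>S. finite S \<and> S \<subseteq> muv ` ?S \<and> card S \<le> DIM(real^('m \<times> 'm \<times> 'n \<times> 'n)) + 1 \<and> x \<in> convex hull S}"
    using H by (subst (asm) caratheodory)
  then obtain T where T: "finite T" "T \<subseteq> muv ` ?S" "card T \<le> DIM(real^('m \<times> 'm \<times> 'n \<times> 'n)) + 1"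
    "0 \<in> convex hull T"
    by blast
  have "0 \<in> {y. \<exists>u. (\<forall>x\<in>T. 0 \<le> u x) \<and> sum u T = 1 \<and> (\<Sum>x\<in>T. u x *\<^sub>R x) = y}"
    using T(4) by (simp only: convex_hull_finite[OF T(1)])
  then obtain u where u: "\<forall>y\<in>T. 0 \<le> u y" "sum u T = 1" "(\<Sum>y\<in>T. u y *\<^sub>R y) = 0"
    by blast
  have "\<forall>y\<in>T. \<exists>X. X \<in> ?S \<and> muv X = y"
  proof
    fix y assume "y \<in> T"
    then have "y \<in> muv ` ?S" using T(2) by (rule subsetD[rotated])
    then obtain X where "X \<in> ?S" "y = muv X" by (rule imageE)
    then show "\<exists>X. X \<in> ?S \<and> muv X = y" by (intro exI[of _ X]) simp
  qed
  from bchoice[OF this] obtain Xf where Xf0: "\<forall>y\<in>T. Xf y \<in> ?S \<and> muv (Xf y) = y" by (elim exE)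
  have Xf: "Xf y \<in> ?S \<and> muv (Xf y) = y" if "y \<in> T" for y using Xf0 that by (rule bspec)
  have cT: "card T \<le> card (UNIV :: ('m \<times> 'm \<times> 'n \<times> 'n) option set)"
    using T(3) by (simp add: card_option_UNIV)
  obtain \<iota> :: "_ \<Rightarrow> ('m \<times> 'm \<times> 'n \<times> 'n) option" where \<iota>: "inj_on \<iota> T"
    using card_le_inj[OF T(1) finite cT] by blast
  define Y where "Y = (\<lambda>k. if k \<in> \<iota> ` T then sqrt (u (the_inv_into T \<iota> k)) *\<^sub>R Xf (the_inv_into T \<iota> k) else 0)"
  have Yi: "Y (\<iota> y) = sqrt (u y) *\<^sub>R Xf y" if "y \<in> T" for y
    unfolding Y_def using that \<iota> by (simp add: the_inv_into_f_f)
  have YK: "Y k \<in> K" for k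
  proof (cases "k \<in> \<iota> ` T")
    case True
    then obtain y where y: "y \<in> T" "k = \<iota> y" by blast
    then have "Y k = sqrt (u y) *\<^sub>R Xf y" using Yi by simp
    moreover have "Xf y \<in> K" using Xf[OF y(1)] by blast
    ultimately show ?thesis using sK by (simp add: subspace_scale)
  next
    case False
    then show ?thesis unfolding Y_def using sK by (simp add: subspace_0)
  qed
  have minors: "\<forall>idx\<in>minor_indices. (\<Sum>k\<in>UNIV. minor2 idx (Y k)) = 0"
  proof
    fix idx :: "'m \<times> 'm \<times> 'n \<times> 'n" assume idx: "idx \<in> minor_indices"
    have "(\<Sum>k\<in>UNIV. minor2 idx (Y k)) = (\<Sum>k\<in>\<iota> ` T. minor2 idx (Y k))"
      by (rule sum.mono_neutral_right) (auto simp: Y_def minor2_0)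
    also have "\<dots> = (\<Sum>y\<in>T. minor2 idx (Y (\<iota> y)))" by (rule sum.reindex[OF \<iota>, unfolded o_def])
    also have "\<dots> = (\<Sum>y\<in>T. u y * (muv (Xf y)) $ idx)"
      by (rule sum.cong[OF refl]) (simp add: Yi minor2_scale u(1) muv_def idx)
    also have "\<dots> = (\<Sum>y\<in>T. u y * y $ idx)" using Xf by simp
    also have "\<dots> = (\<Sum>y\<in>T. u y *\<^sub>R y) $ idx" by simp
    also have "\<dots> = 0" using u(3) by simp
    finally show "(\<Sum>k\<in>UNIV. minor2 idx (Y k)) = 0" .
  qed
  have "\<exists>y\<in>T. u y \<noteq> 0"
  proof (rule ccontr)
    assume "\<not> ?thesis"
    then have "sum u T = 0" by simp
    then show False using u(2) by simp
  qed
  then obtain y where y: "y \<in> T" "u y \<noteq> 0" by blast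
  have "Xf y \<noteq> 0" using Xf[OF y(1)] by auto
  then have "Y (\<iota> y) \<noteq> 0" using Yi[OF y(1)] y(2) u(1) y(1) by simp
  then have ne: "\<exists>k. Y k \<noteq> 0" by blast
  obtain Z where Z: "Z \<in> K" "rank Z = 1" using core[OF minors YK sK dK ne] by blast
  have "Z \<noteq> 0" using Z(2) by auto
  then have "has_rank1_connections K" unfolding has_rank1_connections_def
    using Z subspace_0[OF sK] by (intro bexI[of _ Z] bexI[of _ 0]) auto
  then show False using NR by simp
qed


theorem theorem7:
  fixes K :: "(real^('n::{finite,linorder})^('m::{finite,linorder})) set"
    and d :: nat
  assumes "d \<in> {1, 2, 3}"
    and "subspace K"
    and "dim K = d"
    and "\<not> has_rank1_connections K"
  shows "\<exists>\<beta> :: 'm \<times> 'm \<times> 'n \<times> 'n \<Rightarrow> real.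
           (\<exists>idx\<in>minor_indices. \<beta> idx \<noteq> 0)
         \<and> (\<forall>X\<in>K. (\<Sum>idx\<in>minor_indices. \<beta> idx * minor2 idx X) \<ge> 0)
         \<and> (\<exists>X\<in>K. (\<Sum>idx\<in>minor_indices. \<beta> idx * minor2 idx X) \<noteq> 0)"
proof -
  have sK: "subspace K" and NR: "\<not> has_rank1_connections K" using assms by auto
  have dK: "dim K \<le> 3" using assms(1,3) by auto
  have K0: "K \<noteq> {0}"
  proof
    assume "K = {0}"
    then have "dim K = 0" by simp
    then show False using assms(1,3) by auto
  qed
  obtain X0 where X0: "X0 \<in> K" "X0 \<noteq> 0" using K0 subspace_0[OF sK] by blast
  let ?S = "K \<inter> sphere 0 1"
  let ?H = "convex hull (muv ` ?S)"
  have cS: "compact ?S" using sK by (simp add: closed_subspace compact_Int_closed compact_sphere Int_commute closed_Int_compact)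
  have cH: "compact ?H" by (intro compact_convex_hull compact_continuous_image cont_muv cS)
  have H0: "0 \<notin> ?H"
  proof
    assume "0 \<in> ?H"
    then show False using zero_in_hull_false[OF sK dK NR] by blast
  qed
  obtain a b where ab: "inner a 0 < b" "\<And>x. x \<in> ?H \<Longrightarrow> inner a x > b"
    using separating_hyperplane_closed_point[OF convex_convex_hull compact_imp_closed[OF cH] H0] by blast
  have b0: "b > 0" using ab(1) by simp
  have pos: "inner a (muv X) > 0" if "X \<in> K" "X \<noteq> 0" for X
  proof -
    define X1 where "X1 = (1 / norm X) *\<^sub>R X"
    have "X1 \<in> ?S" unfolding X1_def using that sK by (simp add: subspace_scale)
    then have "muv X1 \<in> ?H" by (simp add: hull_inc)
    then have p1: "inner a (muv X1) > 0" using ab(2) b0 by force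
    have "X = norm X *\<^sub>R X1" unfolding X1_def using that(2) by simp
    then have "muv X = (norm X)^2 *\<^sub>R muv X1" by (metis muv_scale)
    then show ?thesis using p1 that(2) by simp
  qed
  define \<beta> where "\<beta> = (\<lambda>idx. a $ idx)"
  have sumeq: "(\<Sum>idx\<in>minor_indices. \<beta> idx * minor2 idx X) = inner a (muv X)" for X
    unfolding \<beta>_def by (simp add: inner_muv)
  have nn: "\<forall>X\<in>K. (\<Sum>idx\<in>minor_indices. \<beta> idx * minor2 idx X) \<ge> 0"
  proof
    fix X assume "X \<in> K"
    show "(\<Sum>idx\<in>minor_indices. \<beta> idx * minor2 idx X) \<ge> 0"
    proof (cases "X = 0")
      case True then show ?thesis by (simp add: minor2_0)
    next
      case False then show ?thesis using pos[OF \<open>X \<in> K\<close>] sumeq by (simp add: less_imp_le)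
    qed
  qed
  have ex: "(\<Sum>idx\<in>minor_indices. \<beta> idx * minor2 idx X0) \<noteq> 0" using pos[OF X0] sumeq by simp
  have "\<exists>idx\<in>minor_indices. \<beta> idx \<noteq> 0"
  proof (rule ccontr)
    assume "\<not> ?thesis"
    then have "(\<Sum>idx\<in>minor_indices. \<beta> idx * minor2 idx X0) = 0" by simp
    then show False using ex by simp
  qed
  then show ?thesis using nn ex X0(1) by blast
qed

end
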